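(* Let $1<p<\infty$ be fixed. Let $(\lambda_n)_{n\ge1}$ be positive real numbers, $\Lambda_n=\sum_{i=1}^n\lambda_i$, and let $A=(a_{n,k})$ be the weighted mean matrix with $a_{n,k}=\lambda_k/\Lambda_n$ for $1\le k\le n$ and $a_{n,k}=0$ for $k>n$. Suppose there exists a constant $L$ with $0<L<p$ such that for every integer $n\ge1$, \[ \sum_{k=1}^{n}\frac{\lambda_k}{\Lambda_n}\prod_{i=k}^{n}\Big(\frac{\Lambda_{i+1}/\lambda_{i+1}-L/p}{\Lambda_i/\lambda_i}\Big)^{1/(p-1)}\le \frac{p}{p-L}. \] Then $\|A\|_{p,p}\le \frac{p}{p-L}$.
   Context: For $p\ge1$, $l^p$ denotes the space of complex sequences $\mathbf a=(a_n)_{n\ge1}$ with $\|\mathbf a\|_p=(\sum_n|a_n|^p)^{1/p}<\infty$. For an infinite matrix $C=(c_{n,k})$, $\|C\|_{p,p}=\sup_{\|\mathbf a\|_p=1}\|C\mathbf a\|_p$, where $(C\mathbf a)_n=\sum_k c_{n,k}a_k$; equivalently the conclusion says $\sum_{n=1}^\infty\big|\sum_{k=1}^n\frac{\lambda_k a_k}{\Lambda_n}\big|^p\le\big(\frac{p}{p-L}\big)^p\sum_{n=1}^\infty|a_n|^p$ for all $\mathbf a\in l^p$. *)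

theory Defs
  imports "HOL-Analysis.Analysis"
begin

text \<open>Sequences are indexed from 1; the value at index 0 is irrelevant.
  Partial sums Lambda_n = sum of lambda_i for i = 1..n.\<close>
definition Lam :: "(nat \<Rightarrow> real) \<Rightarrow> nat \<Rightarrow> real" where
  "Lam lam n = (\<Sum>i=1..n. lam i)"

definition wmean :: "(nat \<Rightarrow> real) \<Rightarrow> nat \<Rightarrow> nat \<Rightarrow> real" where
  "wmean lam n k = (if 1 \<le> k \<and> k \<le> n then lam k / Lam lam n else 0)"

definition wmean_apply :: "(nat \<Rightarrow> real) \<Rightarrow> (nat \<Rightarrow> complex) \<Rightarrow> nat \<Rightarrow> complex" where
  "wmean_apply lam a n = (\<Sum>k=1..n. complex_of_real (wmean lam n k) * a k)"

end

theory Submission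
  imports Defs
begin

lemma powr_convex0:
  fixes p :: real assumes "p \<ge> 1" shows "convex_on {0..} (\<lambda>x. x powr p)"
proof
  fix t x y :: real
  assume t: "0 < t" "t < 1" and x: "x \<in> {0..}" and y: "y \<in> {0..}"
  show "((1 - t) *\<^sub>R x + t *\<^sub>R y) powr p \<le> (1 - t) * x powr p + t * y powr p"
  proof (cases "x = 0 \<or> y = 0")
    case True
    have aux: "(s * z) powr p \<le> s * z powr p" if "0 < s" "s < 1" "0 \<le> z" for s z :: real
    proof -
      have "(s*z) powr p = s powr p * z powr p" using that by (simp add: powr_mult)
      also have "s powr p \<le> s powr 1" using that assms by (intro powr_mono') auto
      hence "s powr p * z powr p \<le> s * z powr p" using that by (intro mult_right_mono) auto
      finally show ?thesis .
    qed
    show ?thesis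
    proof (cases "x = 0")
      case True
      then show ?thesis using aux[of t y] t y assms by auto
    next
      case False
      then have "y = 0" using \<open>x = 0 \<or> y = 0\<close> by auto
      then show ?thesis using aux[of "1-t" x] t x assms by auto
    qed
  next
    case False
    then have "x \<in> {0<..}" "y \<in> {0<..}" using x y by auto
    from convex_onD[OF powr_convex[OF assms], of t x y] this t show ?thesis by auto
  qed
qed (simp add: convex_real_interval)

lemma power_mean_sum:
  fixes p :: real and A :: "'a set"
  assumes "1 \<le> p" "finite A" "\<And>i. i \<in> A \<Longrightarrow> 0 \<le> \<alpha> i" "\<And>i. i \<in> A \<Longrightarrow> 0 \<le> y i"
    and S: "0 < sum \<alpha> A"
  shows "(\<Sum>i\<in>A. \<alpha> i * y i) powr p \<le> sum \<alpha> A powr (p - 1) * (\<Sum>i\<in>A. \<alpha> i * y i powr p)"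
proof -
  let ?S = "sum \<alpha> A"
  have ne: "A \<noteq> {}" using S by auto
  have "(\<lambda>x. x powr p) (\<Sum>i\<in>A. (\<alpha> i / ?S) *\<^sub>R y i) \<le> (\<Sum>i\<in>A. (\<alpha> i / ?S) * (\<lambda>x. x powr p) (y i))"
    apply (rule convex_on_sum[OF assms(2) ne powr_convex0[OF assms(1)]])
    using assms by (auto simp: sum_divide_distrib[symmetric])
  hence "((\<Sum>i\<in>A. \<alpha> i * y i) / ?S) powr p \<le> (\<Sum>i\<in>A. \<alpha> i * y i powr p) / ?S"
    by (simp add: sum_divide_distrib[symmetric])
  moreover have "((\<Sum>i\<in>A. \<alpha> i * y i) / ?S) powr p = (\<Sum>i\<in>A. \<alpha> i * y i) powr p / ?S powr p"
    using assms by (auto intro!: powr_divide sum_nonneg)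
  ultimately have "(\<Sum>i\<in>A. \<alpha> i * y i) powr p \<le> (\<Sum>i\<in>A. \<alpha> i * y i powr p) / ?S * ?S powr p"
    using S by (simp add: divide_le_eq)
  also have "\<dots> = ?S powr (p - 1) * (\<Sum>i\<in>A. \<alpha> i * y i powr p)"
    using S by (simp add: powr_diff field_simps)
  finally show ?thesis .
qed


theorem theorem3p1:
  fixes p L :: real and lam :: "nat \<Rightarrow> real"
  assumes p: "1 < p"
    and lam_pos: "\<And>n. 1 \<le> n \<Longrightarrow> 0 < lam n"
    and L: "0 < L" "L < p"
    and hyp: "\<And>n. 1 \<le> n \<Longrightarrow>
      (\<Sum>k=1..n. lam k / Lam lam n *
         (\<Prod>i=k..n. ((Lam lam (i+1) / lam (i+1) - L / p) / (Lam lam i / lam i)) powr (1 / (p - 1))))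
      \<le> p / (p - L)"
  shows "\<And>a :: nat \<Rightarrow> complex. summable (\<lambda>n. norm (a (Suc n)) powr p) \<Longrightarrow>
      summable (\<lambda>n. norm (wmean_apply lam a (Suc n)) powr p) \<and>
      (\<Sum>n. norm (wmean_apply lam a (Suc n)) powr p)
        \<le> (p / (p - L)) powr p * (\<Sum>n. norm (a (Suc n)) powr p)"
proof -
  fix a :: "nat \<Rightarrow> complex"
  assume sa: "summable (\<lambda>n. norm (a (Suc n)) powr p)"
  define U where "U = p / (p - L)"
  define c where "c = L / p"
  define t where "t i = Lam lam i / lam i" for i
  define r where "r i = ((t (i+1) - c) / t i) powr (1 / (p - 1))" for i
  define W where "W k = prod r {1..<k}" for k
  define w where "w k = 1 / W k" for k
  define V where "V k = w k powr (p - 1)" for k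
  define x where "x k = norm (a k)" for k
  have c01: "0 < c" "c < 1" using L p by (auto simp: c_def)
  have U1: "U = 1 / (1 - c)" using L p by (simp add: U_def c_def field_simps)
  have Upos: "U > 0" using c01 U1 by auto
  have LamSuc: "Lam lam (Suc n) = Lam lam n + lam (Suc n)" for n
    by (simp add: Lam_def)
  have Lam_ge: "Lam lam n \<ge> lam n" if "1 \<le> n" for n
  proof -
    have "Lam lam n = (\<Sum>i\<in>{1..n}. lam i)" by (simp add: Lam_def)
    also have "\<dots> \<ge> (\<Sum>i\<in>{n}. lam i)"
      using that lam_pos by (intro sum_mono2) (auto intro: less_imp_le)
    finally show ?thesis by simp
  qed
  have Lam_pos: "Lam lam n > 0" if "1 \<le> n" for n
    using Lam_ge[OF that] lam_pos[OF that] by linarith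
  have t_ge: "t i \<ge> 1" if "1 \<le> i" for i
    using Lam_ge[OF that] lam_pos[OF that] by (simp add: t_def)
  have r_pos: "r i > 0" if "1 \<le> i" for i
  proof -
    have "t (i+1) - c > 0" using t_ge[of "i+1"] c01 by auto
    moreover have "t i > 0" using t_ge[OF that] by auto
    ultimately show ?thesis by (simp add: r_def)
  qed
  have W_pos: "W k > 0" for k
    unfolding W_def by (rule prod_pos) (auto intro: r_pos)
  have w_pos: "w k > 0" for k using W_pos[of k] by (simp add: w_def)
  have w_ne: "w k \<noteq> 0" for k using w_pos[of k] by simp
  have V_pos: "V k > 0" for k using w_pos[of k] by (simp add: V_def)
  have prod_eq: "(\<Prod>i=k..n. r i) = W (n+1) / W k" if "1 \<le> k" "k \<le> n" for k n
  proof -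
    have e: "{k..<n+1} = {k..n}" by auto
    have "W (n+1) = W k * (\<Prod>i=k..<n+1. r i)"
      unfolding W_def using that by (subst prod.atLeastLessThan_concat[symmetric]) auto
    hence "W (n+1) = W k * (\<Prod>i=k..n. r i)" by (simp only: e)
    then show ?thesis using W_pos[of k] by (simp add: field_simps)
  qed
  have S_le: "(\<Sum>k=1..n. lam k / Lam lam n * w k) \<le> U * w (n+1)" if "1 \<le> n" for n
  proof -
    have "(\<Sum>k=1..n. lam k / Lam lam n * (W (n+1) / W k)) \<le> U"
    proof -
      have "(\<Sum>k=1..n. lam k / Lam lam n * (W (n+1) / W k)) = (\<Sum>k=1..n. lam k / Lam lam n * (\<Prod>i=k..n. r i))"
        using prod_eq by (intro sum.cong refl) auto
      also have "\<dots> \<le> U" using hyp[OF that] unfolding U_def r_def t_def c_def by simp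
      finally show ?thesis .
    qed
    moreover have "(\<Sum>k=1..n. lam k / Lam lam n * (W (n+1) / W k)) = W (n+1) * (\<Sum>k=1..n. lam k / Lam lam n * w k)"
      unfolding sum_distrib_left w_def by (intro sum.cong refl) simp
    ultimately show ?thesis using W_pos[of "n+1"] by (simp add: w_def field_simps)
  qed
  have V_rec: "V (n+1) * (t (n+1) - c) = V n * t n" if "1 \<le> n" for n
  proof -
    have Wn: "W (Suc n) = W n * r n" unfolding W_def using that by (simp add: prod.atLeastLessThan_Suc)
    have tpos: "t (n+1) - c > 0" "t n > 0" using t_ge[of "n+1"] t_ge[OF that] c01 by auto
    have rp: "r n powr (p - 1) = (t (n+1) - c) / t n"
      unfolding r_def using p tpos by (simp add: powr_powr)
    have "V (n+1) = (w n / r n) powr (p - 1)" by (simp add: V_def w_def Wn)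
    also have "\<dots> = V n / ((t (n+1) - c) / t n)"
      using w_pos[of n] r_pos[OF that] by (simp add: powr_divide V_def rp)
    finally show ?thesis using tpos by (simp add: field_simps)
  qed
  have step: "(1 - c) * (V (n+1) / Lam lam n) = V n / lam n - V (n+1) / lam (n+1)" if "1 \<le> n" for n
  proof -
    have l1: "lam n > 0" "lam (n+1) > 0" "Lam lam n > 0" using lam_pos Lam_pos that by auto
    have "V n * (Lam lam n / lam n) = V (n+1) * ((Lam lam n + lam (n+1)) / lam (n+1) - c)"
      using V_rec[OF that] by (simp add: t_def LamSuc)
    then show ?thesis using l1 by (simp add: field_simps)
  qed
  have tele: "(1 - c) * (\<Sum>n\<in>{k..<k+m}. V (n+1) / Lam lam n) = V k / lam k - V (k+m) / lam (k+m)"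
    if "1 \<le> k" for k m
  proof (induction m)
    case 0 then show ?case by simp
  next
    case (Suc m)
    have "(1 - c) * (\<Sum>n\<in>{k..<k+Suc m}. V (n+1) / Lam lam n)
        = (1 - c) * (\<Sum>n\<in>{k..<k+m}. V (n+1) / Lam lam n) + (1 - c) * (V (k+m+1) / Lam lam (k+m))"
      by (simp add: algebra_simps)
    also have "\<dots> = V k / lam k - V (k + Suc m) / lam (k + Suc m)"
      using Suc step[of "k+m"] that by simp
    finally show ?case .
  qed
  have dual: "(\<Sum>n=k..N. lam k / Lam lam n * V (n+1)) \<le> U * V k" if "1 \<le> k" "k \<le> N" for k N
  proof -
    have e: "{k..N} = {k..<k+(N+1-k)}" using that by auto
    have "(1 - c) * (\<Sum>n=k..N. V (n+1) / Lam lam n) \<le> V k / lam k"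
      using tele[OF that(1), of "N+1-k"] V_pos[of "k+(N+1-k)"] lam_pos[of "k+(N+1-k)"] that
      unfolding e by (smt (verit) divide_pos_pos le_add1 order_trans)
    hence "(\<Sum>n=k..N. V (n+1) / Lam lam n) \<le> U * (V k / lam k)"
    proof -
      have "(\<Sum>n=k..N. V (n+1) / Lam lam n) \<le> (V k / lam k) / (1 - c)"
        using c01 \<open>(1 - c) * _ \<le> _\<close> by (subst pos_le_divide_eq) (auto simp: mult.commute)
      then show ?thesis by (simp add: U1 mult.commute)
    qed
    hence "lam k * (\<Sum>n=k..N. V (n+1) / Lam lam n) \<le> lam k * (U * (V k / lam k))"
      using lam_pos[OF that(1)] by (intro mult_left_mono) auto
    then show ?thesis using lam_pos[OF that(1)] by (simp add: sum_distrib_left field_simps)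
  qed
  define B where "B n = (\<Sum>k=1..n. lam k / Lam lam n * x k)" for n
  have x_nn: "x k \<ge> 0" for k by (simp add: x_def)
  have B_ge: "norm (wmean_apply lam a n) \<le> B n" for n
  proof -
    have "norm (wmean_apply lam a n) \<le> (\<Sum>k=1..n. norm (complex_of_real (wmean lam n k) * a k))"
      unfolding wmean_apply_def by (rule norm_sum)
    also have "\<dots> = B n" unfolding B_def
      by (intro sum.cong refl) (auto simp: wmean_def x_def norm_mult norm_divide abs_of_pos lam_pos Lam_pos)
    finally show ?thesis .
  qed
  define z where "z k = w k * (x k / w k) powr p" for k
  have z_nn: "z k \<ge> 0" for k using w_pos[of k] by (simp add: z_def)
  have zV: "z k * V k = x k powr p" for k
  proof -
    have "z k * V k = w k powr (p - 1) * w k powr 1 * x k powr p / w k powr p"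
      using w_pos[of k] x_nn[of k] by (simp add: z_def V_def powr_divide)
    have e: "w k powr (p - 1) * w k powr 1 = w k powr p"
      by (simp only: powr_add[symmetric]) simp
    have "w k powr (p - 1) * w k powr 1 * x k powr p / w k powr p = x k powr p"
      using w_pos[of k] by (simp only: e) simp
    with \<open>z k * V k = _\<close> show ?thesis by simp
  qed
  have Bn: "B n powr p \<le> U powr (p - 1) * (\<Sum>k=1..n. lam k / Lam lam n * V (n+1) * z k)" if "1 \<le> n" for n
  proof -
    have "B n = (\<Sum>k=1..n. (lam k / Lam lam n * w k) * (x k / w k))"
      unfolding B_def using w_pos by (intro sum.cong refl) (simp add: w_ne)
    also have "\<dots> powr p \<le> (\<Sum>k=1..n. lam k / Lam lam n * w k) powr (p - 1) *
        (\<Sum>k=1..n. (lam k / Lam lam n * w k) * (x k / w k) powr p)"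
    proof (rule power_mean_sum)
      show "0 < (\<Sum>k=1..n. lam k / Lam lam n * w k)"
        using that lam_pos Lam_pos w_pos by (intro sum_pos) auto
    qed (use p lam_pos Lam_pos[OF that] w_pos x_nn in \<open>auto intro!: divide_nonneg_nonneg mult_nonneg_nonneg intro: less_imp_le\<close>)
    also have "\<dots> \<le> (U * w (n+1)) powr (p - 1) * (\<Sum>k=1..n. (lam k / Lam lam n * w k) * (x k / w k) powr p)"
      using p S_le[OF that] lam_pos Lam_pos[OF that] w_pos
      by (intro mult_right_mono powr_mono2 sum_nonneg) (auto intro!: sum_nonneg divide_nonneg_nonneg mult_nonneg_nonneg intro: less_imp_le)
    also have "\<dots> = U powr (p - 1) * (\<Sum>k=1..n. lam k / Lam lam n * V (n+1) * z k)"
      using Upos w_pos[of "n+1"]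
      by (simp add: powr_mult V_def z_def sum_distrib_left algebra_simps)
    finally show ?thesis .
  qed
  have finite_bound: "(\<Sum>n=1..N. B n powr p) \<le> U powr p * (\<Sum>k=1..N. x k powr p)" for N
  proof -
    have "(\<Sum>n=1..N. B n powr p) \<le> (\<Sum>n=1..N. U powr (p - 1) * (\<Sum>k=1..n. lam k / Lam lam n * V (n+1) * z k))"
      by (intro sum_mono Bn) auto
    also have "\<dots> = U powr (p - 1) * (\<Sum>n\<in>{1..N}. \<Sum>k\<in>{k. k \<in> {1..N} \<and> k \<le> n}. lam k / Lam lam n * V (n+1) * z k)"
      by (simp add: sum_distrib_left) (intro sum.cong refl arg_cong2[where f=sum], auto)
    also have "\<dots> = U powr (p - 1) * (\<Sum>k\<in>{1..N}. \<Sum>n\<in>{n. n \<in> {1..N} \<and> k \<le> n}. lam k / Lam lam n * V (n+1) * z k)"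
      by (subst sum.swap_restrict) auto
    also have "\<dots> = U powr (p - 1) * (\<Sum>k\<in>{1..N}. z k * (\<Sum>n=k..N. lam k / Lam lam n * V (n+1)))"
      by (simp add: sum_distrib_left) (intro sum.cong refl arg_cong2[where f=sum], auto simp: algebra_simps)
    also have "\<dots> \<le> U powr (p - 1) * (\<Sum>k\<in>{1..N}. z k * (U * V k))"
      using Upos z_nn dual by (intro mult_left_mono sum_mono) auto
    also have "\<dots> = U powr (p - 1) * U * (\<Sum>k\<in>{1..N}. x k powr p)"
      by (simp add: sum_distrib_left zV[symmetric] algebra_simps)
    also have "U powr (p - 1) * U = U powr p" using Upos by (simp add: powr_diff)
    finally show ?thesis .
  qed
  define f where "f n = norm (wmean_apply lam a (Suc n)) powr p" for n
  define g where "g n = norm (a (Suc n)) powr p" for n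
  have partial: "sum f {..<M} \<le> U powr p * suminf g" for M
  proof -
    have "sum f {..<M} = (\<Sum>n=1..M. norm (wmean_apply lam a n) powr p)"
      unfolding f_def by (rule sum_bounds_lt_plus1)
    also have "\<dots> \<le> (\<Sum>n=1..M. B n powr p)"
      using B_ge p by (intro sum_mono powr_mono2) auto
    also have "\<dots> \<le> U powr p * (\<Sum>k=1..M. x k powr p)" by (rule finite_bound)
    also have "(\<Sum>k=1..M. x k powr p) = sum g {..<M}"
      unfolding g_def x_def by (rule sum_bounds_lt_plus1[symmetric])
    also have "\<dots> \<le> suminf g"
      using sa unfolding g_def by (intro sum_le_suminf) auto
    finally show ?thesis using Upos by (simp add: mult_left_mono)
  qed
  have sf: "summable f"
    by (rule bounded_imp_summable[where B="U powr p * suminf g"])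
       (simp add: f_def, metis partial lessThan_Suc_atMost)
  have "suminf f \<le> U powr p * suminf g" by (rule suminf_le_const[OF sf partial])
  then show "summable (\<lambda>n. norm (wmean_apply lam a (Suc n)) powr p) \<and>
      (\<Sum>n. norm (wmean_apply lam a (Suc n)) powr p)
        \<le> (p / (p - L)) powr p * (\<Sum>n. norm (a (Suc n)) powr p)"
    using sf unfolding f_def[abs_def] g_def[abs_def] U_def by simp
qed

end
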